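(* Let $d\in\mathbb{N}$ and $\mathcal{M}\subseteq\mathbb{N}_0^d$. Then $\mathcal{M}$ is reflexive if and only if there is a game $\mathcal{X}\subseteq\mathbb{N}_0^d$ such that the limit $\mathcal{X}^\infty$ exists and $\mathcal{M}=\mathcal{X}^\infty$.
   Context: For $d\in\mathbb{N}$ a game is a set $\mathcal{M}\subseteq\mathbb{N}_0^d$ of moves ($\mathbb{N}$ = positive integers, $\mathbb{N}_0$ = nonnegative integers). From position $\boldsymbol x\in\mathbb{N}_0^d$ a player may move to $\boldsymbol y\in\mathbb{N}_0^d$ iff $\boldsymbol x-\boldsymbol y\in\mathcal{M}$ ($\boldsymbol y$ is an option of $\boldsymbol x$). Misère play: a player who cannot move wins. If $\boldsymbol 0\in\mathcal{M}$, every position is a draw and the set of P-positions is $P(\mathcal{M})=\varnothing$. Otherwise outcomes are defined recursively: a position is an N-position if it has no option or some option is a P-position; otherwise (its set of options is nonempty and consists only of N-positions) it is a P-position. $P(\mathcal{M})$ and $N(\mathcal{M})$ denote the sets of P- and N-positions. The $\star$-operator is $\mathcal{M}^\star=P(\mathcal{M})$ (viewed as a new game). Set $\mathcal{M}^0=\mathcal{M}$, $\mathcal{M}^i=(\mathcal{M}^{i-1})^\star$. The limit $\mathcal{M}^\infty=\lim_{i\to\infty}\mathcal{M}^i$ exists if for every $\boldsymbol x\in\mathbb{N}_0^d$ either $\boldsymbol x\in\mathcal{M}^i$ for all sufficiently large $i$ or $\boldsymbol x\notin\mathcal{M}^i$ for all sufficiently large $i$; then $\mathcal{M}^\infty$ is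 the set of $\boldsymbol x$ of the first kind. A game $\mathcal{M}$ is reflexive if $\mathcal{M}=\mathcal{M}^\star$. *)

theory Defs
  imports "HOL-Analysis.Analysis"
begin

text \<open>Positions are vectors in N_0^d, modelled as nat ^ 'd for a finite index type 'd
  (d = CARD('d) >= 1).\<close>

type_synonym 'd pos = "nat ^ 'd"

definition is_option :: "'d::finite pos set \<Rightarrow> 'd pos \<Rightarrow> 'd pos \<Rightarrow> bool" where
  "is_option M x y \<longleftrightarrow> (\<exists>m\<in>M. x = y + m)"

text \<open>Well-founded relation along which outcomes are computed (0 \<notin> M): options have
  strictly smaller coordinate sum.\<close>
definition opt_rel :: "'d::finite pos set \<Rightarrow> ('d pos \<times> 'd pos) set" where
  "opt_rel M = {(y, x). is_option M x y \<and> y \<noteq> x}"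

lemma wf_opt_rel: "wf (opt_rel (M :: 'd::finite pos set))"
proof (rule wf_subset[OF wf_measure[of "\<lambda>x::'d pos. \<Sum>i\<in>UNIV. x $ i"]])
  show "opt_rel M \<subseteq> Wellfounded.measure (\<lambda>x. \<Sum>i\<in>UNIV. x $ i)"
  proof
    fix p assume "p \<in> opt_rel M"
    then obtain y x m where p: "p = (y, x)" and xm: "x = y + m" and ne: "y \<noteq> x"
      unfolding opt_rel_def is_option_def by auto
    then obtain j where "m $ j \<noteq> 0" by (metis add.right_neutral vec_eq_iff zero_index)
    hence "(\<Sum>i\<in>UNIV. y $ i) < (\<Sum>i\<in>UNIV. y $ i + m $ i)"
      by (intro sum_strict_mono_ex1) auto
    thus "p \<in> Wellfounded.measure (\<lambda>x. \<Sum>i\<in>UNIV. x $ i)" using p xm by simp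
  qed
qed

text \<open>Misere outcome: x is a P-position iff it has an option and all options are
  N-positions (i.e. not P-positions).  Defined by well-founded recursion.\<close>
definition is_P :: "'d::finite pos set \<Rightarrow> 'd pos \<Rightarrow> bool" where
  "is_P M = wfrec (opt_rel M)
     (\<lambda>f x. (\<exists>y. is_option M x y) \<and> (\<forall>y. is_option M x y \<longrightarrow> \<not> f y))"

text \<open>P(M): empty if 0 \<in> M (all positions are draws), else the set of P-positions.\<close>
definition Ppos :: "'d::finite pos set \<Rightarrow> 'd pos set" where
  "Ppos M = (if 0 \<in> M then {} else {x. is_P M x})"

definition star :: "'d::finite pos set \<Rightarrow> 'd pos set" where
  "star M = Ppos M"

definition star_iter :: "'d::finite pos set \<Rightarrow> nat \<Rightarrow> 'd pos set" where
  "star_iter M i = (star ^^ i) M"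

definition reflexive_game :: "'d::finite pos set \<Rightarrow> bool" where
  "reflexive_game M \<longleftrightarrow> M = star M"

definition limit_exists :: "(nat \<Rightarrow> 'a set) \<Rightarrow> bool" where
  "limit_exists S \<longleftrightarrow> (\<forall>x. (\<forall>\<^sub>F i in sequentially. x \<in> S i) \<or> (\<forall>\<^sub>F i in sequentially. x \<notin> S i))"

definition limit_set :: "(nat \<Rightarrow> 'a set) \<Rightarrow> 'a set" where
  "limit_set S = {x. \<forall>\<^sub>F i in sequentially. x \<in> S i}"

end

theory Submission
  imports Defs
begin

lemma is_P_unfold:
  assumes "0 \<notin> M"
  shows "is_P M x \<longleftrightarrow> (\<exists>y. is_option M x y) \<and> (\<forall>y. is_option M x y \<longrightarrow> \<not> is_P M y)"
proof -
  have "is_P M x = (\<lambda>f x. (\<exists>y. is_option M x y) \<and> (\<forall>y. is_option M x y \<longrightarrow> \<not> f y))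
          (cut (is_P M) (opt_rel M) x) x"
    unfolding is_P_def by (rule wfrec[OF wf_opt_rel])
  moreover have "\<And>y. is_option M x y \<Longrightarrow> (y, x) \<in> opt_rel M"
    using assms unfolding opt_rel_def is_option_def by auto
  ultimately show ?thesis by (auto simp: cut_apply)
qed

definition D :: "'d::finite pos \<Rightarrow> 'd pos set" where
  "D x = {m. \<forall>i. m $ i \<le> x $ i}"

lemma finite_D: "finite (D (x::'d::finite pos))"
proof -
  have "D x \<subseteq> (\<lambda>f. \<chi> i. f i) ` PiE UNIV (\<lambda>i. {..x $ i})"
  proof
    fix m assume "m \<in> D x"
    hence "(\<lambda>i. m $ i) \<in> PiE UNIV (\<lambda>i. {..x $ i})" by (auto simp: D_def)
    moreover have "m = (\<chi> i. m $ i)" by simp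
    ultimately show "m \<in> (\<lambda>f. \<chi> i. f i) ` PiE UNIV (\<lambda>i. {..x $ i})" by blast
  qed
  moreover have "finite (PiE (UNIV::'d set) (\<lambda>i. {..x $ i}))"
    by (rule finite_PiE) auto
  ultimately show ?thesis by (meson finite_imageI finite_subset)
qed

lemma is_P_local:
  assumes "0 \<notin> M" "0 \<notin> M'"
  shows "M \<inter> D x = M' \<inter> D x \<Longrightarrow> is_P M x = is_P M' x"
proof (induction x rule: wf_induct[OF wf_opt_rel[of M]])
  case (1 x)
  have opt: "is_option M x y \<longleftrightarrow> is_option M' x y" for y
  proof -
    have "x = y + m \<Longrightarrow> m \<in> D x" for m by (auto simp: D_def)
    thus ?thesis using "1.prems" unfolding is_option_def by blast
  qed
  have sub: "is_option M x y \<Longrightarrow> M \<inter> D y = M' \<inter> D y" for y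
  proof -
    assume "is_option M x y"
    hence "D y \<subseteq> D x" unfolding is_option_def D_def
      by (auto simp: order_trans[OF _ le_add1])
    thus ?thesis using "1.prems" by blast
  qed
  have rel: "is_option M x y \<Longrightarrow> (y, x) \<in> opt_rel M" for y
    using assms(1) unfolding opt_rel_def is_option_def by auto
  show ?case
    using is_P_unfold[OF assms(1), of x] is_P_unfold[OF assms(2), of x] opt
      "1.IH" rel sub by metis
qed

lemma Ppos_local:
  assumes "M \<inter> D x = M' \<inter> D x"
  shows "x \<in> Ppos M \<longleftrightarrow> x \<in> Ppos M'"
proof -
  have "0 \<in> D x" by (simp add: D_def)
  hence "0 \<in> M \<longleftrightarrow> 0 \<in> M'" using assms by blast
  thus ?thesis using is_P_local[OF _ _ assms] by (auto simp: Ppos_def)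
qed

theorem lemma1:
  fixes M :: "'d::finite pos set"
  shows "reflexive_game M \<longleftrightarrow>
    (\<exists>X :: 'd pos set. limit_exists (star_iter X) \<and> M = limit_set (star_iter X))"
proof
  assume r: "reflexive_game M"
  have c: "star_iter M i = M" for i
    using r by (induction i) (auto simp: star_iter_def reflexive_game_def)
  show "\<exists>X :: 'd pos set. limit_exists (star_iter X) \<and> M = limit_set (star_iter X)"
    by (rule exI[of _ M]) (simp add: c limit_exists_def limit_set_def)
next
  assume "\<exists>X :: 'd pos set. limit_exists (star_iter X) \<and> M = limit_set (star_iter X)"
  then obtain X where le: "limit_exists (star_iter X)" and MX: "M = limit_set (star_iter X)"
    by blast
  define S where "S = star_iter X"
  have ev: "\<forall>\<^sub>F i in sequentially. (m \<in> S i \<longleftrightarrow> m \<in> M)" for m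
  proof (cases "\<forall>\<^sub>F i in sequentially. m \<in> S i")
    case True
    hence "m \<in> M" using MX S_def by (simp add: limit_set_def)
    then show ?thesis using True by (auto elim: eventually_mono)
  next
    case False
    hence "\<forall>\<^sub>F i in sequentially. m \<notin> S i" using le S_def by (auto simp: limit_exists_def)
    moreover have "m \<notin> M" using MX S_def False by (simp add: limit_set_def)
    ultimately show ?thesis by (auto elim: eventually_mono)
  qed
  have Ssuc: "S (Suc i) = star (S i)" for i by (simp add: S_def star_iter_def)
  have "x \<in> M \<longleftrightarrow> x \<in> star M" for x
  proof -
    have "\<forall>\<^sub>F i in sequentially. \<forall>m\<in>D x. (m \<in> S i \<longleftrightarrow> m \<in> M)"
      by (rule eventually_ball_finite[OF finite_D]) (use ev in auto)
    moreover have "\<forall>\<^sub>F i in sequentially. (x \<in> S (Suc i) \<longleftrightarrow> x \<in> M)"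
      by (subst eventually_sequentially_Suc[of "\<lambda>i. (x \<in> S i \<longleftrightarrow> x \<in> M)"]) (rule ev)
    ultimately have "\<forall>\<^sub>F i in sequentially. (\<forall>m\<in>D x. (m \<in> S i \<longleftrightarrow> m \<in> M)) \<and>
        (x \<in> S (Suc i) \<longleftrightarrow> x \<in> M)" by (rule eventually_conj)
    then obtain i where i1: "\<forall>m\<in>D x. (m \<in> S i \<longleftrightarrow> m \<in> M)"
        and i2: "x \<in> S (Suc i) \<longleftrightarrow> x \<in> M"
      using eventually_happens'[OF trivial_limit_sequentially] by blast
    have "S i \<inter> D x = M \<inter> D x" using i1 by blast
    hence "x \<in> Ppos (S i) \<longleftrightarrow> x \<in> Ppos M" by (rule Ppos_local)
    thus ?thesis using i2 Ssuc by (simp add: star_def)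
  qed
  thus "reflexive_game M" unfolding reflexive_game_def by blast
qed

end
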